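(* A graphic sequence $d$ is forcibly bipartite unicyclic if and only if $d=(2,2,2,2)$.
   Context: A sequence of positive integers $d=(d_1,\ldots,d_n)$ is graphic if some simple graph on $\{1,\ldots,n\}$ has vertex $i$ of degree $d_i$ (a realization). A graph is bipartite unicyclic if it is connected, bipartite, and contains exactly one cycle. A sequence is forcibly bipartite unicyclic if every realization of it is bipartite unicyclic. *)

theory Defs
  imports Main
begin

text \<open>Graphs on the vertex set {0..<n} (vertex i of the paper is i-1 here),
  given by an edge set of 2-element subsets.\<close>

definition simple_graph :: "nat \<Rightarrow> nat set set \<Rightarrow> bool" where
  "simple_graph n E \<longleftrightarrow> E \<subseteq> {{u, v} | u v. u < n \<and> v < n \<and> u \<noteq> v}"

definition degree :: "nat set set \<Rightarrow> nat \<Rightarrow> nat" where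
  "degree E v = card {e \<in> E. v \<in> e}"

definition realization :: "nat list \<Rightarrow> nat set set \<Rightarrow> bool" where
  "realization d E \<longleftrightarrow> simple_graph (length d) E \<and>
     (\<forall>i < length d. degree E i = d ! i)"

definition graphic :: "nat list \<Rightarrow> bool" where
  "graphic d \<longleftrightarrow> (\<exists>E. realization d E)"

definition connected_graph :: "nat \<Rightarrow> nat set set \<Rightarrow> bool" where
  "connected_graph n E \<longleftrightarrow>
     (\<forall>u < n. \<forall>v < n. (u, v) \<in> {(x, y). {x, y} \<in> E}\<^sup>*)"

definition bipartite_graph :: "nat \<Rightarrow> nat set set \<Rightarrow> bool" where
  "bipartite_graph n E \<longleftrightarrow> (\<exists>part :: nat \<Rightarrow> bool. \<forall>u v. {u, v} \<in> E \<longrightarrow> part u \<noteq> part v)"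

definition is_cycle :: "nat set set \<Rightarrow> nat set set \<Rightarrow> bool" where
  "is_cycle E C \<longleftrightarrow> C \<subseteq> E \<and>
     (\<exists>vs. length vs \<ge> 3 \<and> distinct vs \<and>
        C = {{vs ! i, vs ! ((i + 1) mod length vs)} | i. i < length vs})"

definition bipartite_unicyclic :: "nat \<Rightarrow> nat set set \<Rightarrow> bool" where
  "bipartite_unicyclic n E \<longleftrightarrow> connected_graph n E \<and> bipartite_graph n E \<and>
     (\<exists>!C. is_cycle E C)"

definition forcibly_bipartite_unicyclic :: "nat list \<Rightarrow> bool" where
  "forcibly_bipartite_unicyclic d \<longleftrightarrow>
     (\<forall>E. realization d E \<longrightarrow> bipartite_unicyclic (length d) E)"

end

theory Submission
  imports Defs
begin

lemma sg_edge:
  assumes "simple_graph n E" "{u, v} \<in> E"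
  shows "u < n \<and> v < n \<and> u \<noteq> v"
proof -
  obtain a b where "{u,v} = {a,b}" "a < n" "b < n" "a \<noteq> b"
    using assms unfolding simple_graph_def by blast
  then show ?thesis by (auto simp: doubleton_eq_iff)
qed

lemma sg_finite:
  assumes "simple_graph n E" shows "finite E"
proof -
  have "E \<subseteq> (\<lambda>(u,v). {u,v}) ` ({..<n} \<times> {..<n})"
    using assms unfolding simple_graph_def by auto
  then show ?thesis by (rule finite_subset) auto
qed

lemma switch_deg_one:
  assumes "finite E" "r \<in> E" "t \<notin> E" "x \<in> r" "x \<in> t" "x \<notin> r'" "x \<notin> t'"
  shows "card {e \<in> (E - {r, r'}) \<union> {t, t'}. x \<in> e} = card {e \<in> E. x \<in> e}"
proof -
  let ?S = "{e \<in> E. x \<in> e}"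
  have eq: "{e \<in> (E - {r, r'}) \<union> {t, t'}. x \<in> e} = insert t (?S - {r})"
  proof (rule set_eqI)
    fix e show "e \<in> {e \<in> (E - {r, r'}) \<union> {t, t'}. x \<in> e} \<longleftrightarrow> e \<in> insert t (?S - {r})"
      using assms(4-7) by auto
  qed
  have fin: "finite ?S" using assms(1) by simp
  have t: "t \<notin> ?S - {r}" using assms(3) by simp
  have r: "r \<in> ?S" using assms(2,4) by simp
  have "card (insert t (?S - {r})) = Suc (card (?S - {r}))" using fin t by simp
  also have "\<dots> = card ?S" using fin r by (metis card_Suc_Diff1)
  finally show ?thesis using eq by simp
qed

lemma switch_deg:
  assumes "finite E" "distinct [a,b,c,d]" "{a,b} \<in> E" "{c,d} \<in> E" "{a,c} \<notin> E" "{b,d} \<notin> E"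
  shows "degree ((E - {{a,b},{c,d}}) \<union> {{a,c},{b,d}}) x = degree E x"
proof -
  have ne: "a \<noteq> b" "a \<noteq> c" "a \<noteq> d" "b \<noteq> c" "b \<noteq> d" "c \<noteq> d" using assms(2) by auto
  have c1: "{{a,b},{c,d}} = {{c,d},{a,b}}" "{{a,c},{b,d}} = {{b,d},{a,c}}" by (rule insert_commute)+
  consider "x = a" | "x = b" | "x = c" | "x = d" | "x \<notin> {a,b,c,d}" by blast
  then show ?thesis
  proof cases
    case 1 then show ?thesis unfolding degree_def 1
      by (rule_tac switch_deg_one) (use assms ne in auto)
  next
    case 2 then show ?thesis unfolding degree_def 2 c1(2)
      by (rule_tac switch_deg_one) (use assms ne in auto)
  next
    case 3 then show ?thesis unfolding degree_def 3 c1(1)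
      by (rule_tac switch_deg_one) (use assms ne in auto)
  next
    case 4 then show ?thesis unfolding degree_def 4 c1
      by (rule_tac switch_deg_one) (use assms ne in auto)
  next
    case 5
    then have "{e \<in> (E - {{a,b},{c,d}}) \<union> {{a,c},{b,d}}. x \<in> e} = {e \<in> E. x \<in> e}" by auto
    then show ?thesis unfolding degree_def by simp
  qed
qed

lemma switch_real:
  assumes R: "realization d E"
  and dist: "distinct [a,b,c,e]" and E: "{a,b} \<in> E" "{c,e} \<in> E" "{a,c} \<notin> E" "{b,e} \<notin> E"
  shows "realization d ((E - {{a,b},{c,e}}) \<union> {{a,c},{b,e}})"
proof -
  have sg: "simple_graph (length d) E" and deg: "\<forall>i < length d. degree E i = d ! i"
    using R unfolding realization_def by auto
  have lt: "a < length d" "b < length d" "c < length d" "e < length d"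
    using sg_edge[OF sg E(1)] sg_edge[OF sg E(2)] by auto
  have "simple_graph (length d) ((E - {{a,b},{c,e}}) \<union> {{a,c},{b,e}})"
    unfolding simple_graph_def
  proof
    fix f assume "f \<in> (E - {{a,b},{c,e}}) \<union> {{a,c},{b,e}}"
    then consider "f \<in> E" | "f = {a,c}" | "f = {b,e}" by blast
    then show "f \<in> {{u, v} |u v. u < length d \<and> v < length d \<and> u \<noteq> v}"
    proof cases
      case 1 then show ?thesis using sg unfolding simple_graph_def by blast
    next
      case 2 then show ?thesis using lt dist by auto
    next
      case 3 then show ?thesis using lt dist by auto
    qed
  qed
  moreover have "\<forall>i < length d. degree ((E - {{a,b},{c,e}}) \<union> {{a,c},{b,e}}) i = d ! i"
    using switch_deg[OF sg_finite[OF sg] dist E] deg by simp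
  ultimately show ?thesis unfolding realization_def by blast
qed

lemma bip_part:
  assumes fb: "forcibly_bipartite_unicyclic d" and R: "realization d E"
  obtains part :: "nat \<Rightarrow> bool" where "\<And>u v. {u,v} \<in> E \<Longrightarrow> part u \<noteq> part v"
proof -
  have "bipartite_unicyclic (length d) E"
    using fb R unfolding forcibly_bipartite_unicyclic_def by simp
  then have "bipartite_graph (length d) E" unfolding bipartite_unicyclic_def by simp
  then show ?thesis using that unfolding bipartite_graph_def by metis
qed

lemma bool3: "(p::bool) \<noteq> q \<Longrightarrow> q \<noteq> r \<Longrightarrow> p \<noteq> r \<Longrightarrow> False" by auto

lemma switch_contra:
  assumes fb: "forcibly_bipartite_unicyclic d" and R: "realization d E"
  and dist: "distinct [a,b,c,e]" and E: "{a,b} \<in> E" "{c,e} \<in> E" "{a,c} \<notin> E" "{b,e} \<notin> E"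
  and T: "{x,y} \<in> (E - {{a,b},{c,e}}) \<union> {{a,c},{b,e}}"
         "{y,z} \<in> (E - {{a,b},{c,e}}) \<union> {{a,c},{b,e}}"
         "{x,z} \<in> (E - {{a,b},{c,e}}) \<union> {{a,c},{b,e}}"
  shows False
proof -
  have R': "realization d ((E - {{a,b},{c,e}}) \<union> {{a,c},{b,e}})"
    by (rule switch_real[OF R dist E])
  obtain part :: "nat \<Rightarrow> bool" where
    p: "\<And>u v. {u,v} \<in> (E - {{a,b},{c,e}}) \<union> {{a,c},{b,e}} \<Longrightarrow> part u \<noteq> part v"
    using bip_part[OF fb R'] by metis
  show False by (rule bool3[OF p[OF T(1)] p[OF T(2)] p[OF T(3)]])
qed

lemma path5:
  assumes fb: "forcibly_bipartite_unicyclic d" and R: "realization d E"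
  and dist: "distinct [v0,v1,v2,v3,v4]"
  and E: "{v0,v1} \<in> E" "{v1,v2} \<in> E" "{v2,v3} \<in> E" "{v3,v4} \<in> E"
  shows False
proof -
  obtain part :: "nat \<Rightarrow> bool" where p: "\<And>u v. {u,v} \<in> E \<Longrightarrow> part u \<noteq> part v"
    using bip_part[OF fb R] by metis
  have q1: "part v1 = part v3" using p[OF E(2)] p[OF E(3)] by auto
  have q2: "part v0 = part v2" using p[OF E(1)] p[OF E(2)] by auto
  have q3: "part v2 = part v4" using p[OF E(3)] p[OF E(4)] by auto
  have n13: "{v1,v3} \<notin> E" using q1 p[of v1 v3] by auto
  have n04: "{v0,v4} \<notin> E" using q2 q3 p[of v0 v4] by auto
  have d4: "distinct [v1,v0,v3,v4]" using dist by auto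
  have E1: "{v1,v0} \<in> E" using E(1) by (simp add: insert_commute)
  show False
  proof (rule switch_contra[OF fb R d4 E1 E(4) n13 n04, of v1 v2 v3])
    show "{v1,v2} \<in> (E - {{v1,v0},{v3,v4}}) \<union> {{v1,v3},{v0,v4}}"
      using E(2) dist by (auto simp: doubleton_eq_iff)
    show "{v2,v3} \<in> (E - {{v1,v0},{v3,v4}}) \<union> {{v1,v3},{v0,v4}}"
      using E(3) dist by (auto simp: doubleton_eq_iff)
    show "{v1,v3} \<in> (E - {{v1,v0},{v3,v4}}) \<union> {{v1,v3},{v0,v4}}" by simp
  qed
qed

lemma rtrancl_exit:
  assumes "(a, b) \<in> R\<^sup>*" "a \<in> S" "b \<notin> S"
  shows "\<exists>x y. (x, y) \<in> R \<and> x \<in> S \<and> y \<notin> S"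
  using assms
proof (induction rule: rtrancl_induct)
  case base then show ?case by simp
next
  case (step y z)
  show ?case
  proof (cases "y \<in> S")
    case True then show ?thesis using step by blast
  next
    case False then show ?thesis using step by blast
  qed
qed

lemma deg2:
  assumes sg: "simple_graph 4 E" and S: "{..<4} \<subseteq> {a,b,c,e}" and dist: "distinct [a,b,c,e]"
  and E: "{a,b} \<in> E" "{a,e} \<in> E" "{a,c} \<notin> E"
  shows "degree E a = 2"
proof -
  have "{f \<in> E. a \<in> f} = {{a,b},{a,e}}"
  proof (rule set_eqI, rule iffI)
    fix f assume f: "f \<in> {f \<in> E. a \<in> f}"
    then obtain u v where uv: "f = {u,v}" "u < 4" "v < 4" "u \<noteq> v"
      using sg unfolding simple_graph_def by blast
    then have "u \<in> {a,b,c,e}" "v \<in> {a,b,c,e}" using S by auto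
    moreover have "a = u \<or> a = v" using f uv by auto
    moreover have "f \<noteq> {a,c}" using f E(3) by auto
    ultimately show "f \<in> {{a,b},{a,e}}" using uv by (auto simp: insert_commute)
  next
    fix f assume "f \<in> {{a,b},{a,e}}"
    then show "f \<in> {f \<in> E. a \<in> f}" using E by auto
  qed
  moreover have "{a,b} \<noteq> {a,e}" using dist by (auto simp: doubleton_eq_iff)
  ultimately show ?thesis unfolding degree_def by simp
qed

lemma fwd:
  assumes fb: "forcibly_bipartite_unicyclic d" and g: "graphic d"
  shows "d = [2,2,2,2]"
proof -
  obtain E where R: "realization d E" using g unfolding graphic_def by blast
  let ?n = "length d"
  have sg: "simple_graph ?n E" and deg: "\<forall>i < ?n. degree E i = d ! i"
    using R unfolding realization_def by auto
  have bu: "bipartite_unicyclic ?n E" using fb R unfolding forcibly_bipartite_unicyclic_def by simp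
  then have conn: "connected_graph ?n E" unfolding bipartite_unicyclic_def by simp
  from bu obtain C where "is_cycle E C" unfolding bipartite_unicyclic_def by blast
  then obtain vs where CE: "C \<subseteq> E" and k3: "length vs \<ge> 3" and dvs: "distinct vs"
    and Cdef: "C = {{vs ! i, vs ! ((i + 1) mod length vs)} | i. i < length vs}"
    unfolding is_cycle_def by blast
  obtain part :: "nat \<Rightarrow> bool" where p: "\<And>u v. {u,v} \<in> E \<Longrightarrow> part u \<noteq> part v"
    using bip_part[OF fb R] by metis
  let ?k = "length vs"
  have ed: "{vs ! i, vs ! ((i + 1) mod ?k)} \<in> E" if "i < ?k" for i
    using CE Cdef that by blast
  have vlt: "vs ! i < ?n" if "i < ?k" for i using sg_edge[OF sg ed[OF that]] by simp
  have setlt: "set vs \<subseteq> {..<?n}" using vlt by (auto simp: in_set_conv_nth)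
  consider "?k = 3" | "?k = 4" | "?k \<ge> 5" using k3 by linarith
  then show ?thesis
  proof cases
    case 1
    then obtain v0 v1 v2 where vs: "vs = [v0,v1,v2]"
      by (auto simp: numeral_eq_Suc length_Suc_conv)
    have "part v0 \<noteq> part v1" using p[OF ed[of 0]] vs by simp
    moreover have "part v1 \<noteq> part v2" using p[OF ed[of 1]] vs by simp
    moreover have "part v2 \<noteq> part v0" using p[OF ed[of 2]] vs by simp
    ultimately show ?thesis by auto
  next
    case 2
    then obtain v0 v1 v2 v3 where vs: "vs = [v0,v1,v2,v3]"
      by (auto simp: numeral_eq_Suc length_Suc_conv)
    have e01: "{v0,v1} \<in> E" using ed[of 0] vs by simp
    have e12: "{v1,v2} \<in> E" using ed[of 1] vs by simp
    have e23: "{v2,v3} \<in> E" using ed[of 2] vs by simp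
    have e30: "{v3,v0} \<in> E" using ed[of 3] vs by simp
    have dv: "distinct [v0,v1,v2,v3]" using dvs vs by simp
    have "card (set vs) = 4" using dvs 2 by (simp add: distinct_card)
    then have n4: "4 \<le> ?n" using card_mono[OF _ setlt] by simp
    show ?thesis
    proof (cases "?n = 4")
      case False
      then have "\<not> {..<?n} \<subseteq> set vs" using \<open>card (set vs) = 4\<close> n4
        by (metis card_lessThan card_mono finite_set le_antisym)
      then obtain u where u: "u < ?n" "u \<notin> set vs" by blast
      have "(v0, u) \<in> {(x, y). {x, y} \<in> E}\<^sup>*"
        using conn u vlt[of 0] vs unfolding connected_graph_def by simp
      then obtain x w where xw: "{x,w} \<in> E" "x \<in> set vs" "w \<notin> set vs"
      proof -
        have "v0 \<in> set vs" using vs by simp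
        from rtrancl_exit[OF \<open>(v0, u) \<in> _\<close> this u(2)] show ?thesis using that by blast
      qed
      have wx: "{w,x} \<in> E" using xw(1) by (simp add: insert_commute)
      have "x = v0 \<or> x = v1 \<or> x = v2 \<or> x = v3" using xw(2) vs by simp
      then show ?thesis
      proof (elim disjE)
        assume "x = v0" then show ?thesis
          using path5[OF fb R _ wx[unfolded \<open>x = v0\<close>] e01 e12 e23] xw(3) vs dv by auto
      next
        assume "x = v1" then show ?thesis
          using path5[OF fb R _ wx[unfolded \<open>x = v1\<close>] e12 e23 e30] xw(3) vs dv by auto
      next
        assume "x = v2" then show ?thesis
          using path5[OF fb R _ wx[unfolded \<open>x = v2\<close>] e23 e30 e01] xw(3) vs dv by auto
      next
        assume "x = v3" then show ?thesis
          using path5[OF fb R _ wx[unfolded \<open>x = v3\<close>] e30 e01 e12] xw(3) vs dv by auto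
      qed
    next
      case True
      have sg4: "simple_graph 4 E" using sg True by simp
      have "set vs = {..<4}"
        using card_subset_eq[OF _ setlt] \<open>card (set vs) = 4\<close> True by simp
      then have S: "{..<4} = {v0,v1,v2,v3}" using vs by simp
      have q02: "part v0 = part v2" using p[OF e01] p[OF e12] by auto
      have q13: "part v1 = part v3" using p[OF e12] p[OF e23] by auto
      have n02: "{v0,v2} \<notin> E" using q02 p[of v0 v2] by auto
      have n13: "{v1,v3} \<notin> E" using q13 p[of v1 v3] by auto
      have n20: "{v2,v0} \<notin> E" using n02 by (simp add: insert_commute)
      have n31: "{v3,v1} \<notin> E" using n13 by (simp add: insert_commute)
      have c: "{a,b} \<in> E \<Longrightarrow> {b,a} \<in> E" for a b by (simp add: insert_commute)
      have D0: "degree E v0 = 2" by (rule deg2[OF sg4 _ _ e01 c[OF e30] n02]) (use S dv in auto)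
      have D1: "degree E v1 = 2" by (rule deg2[OF sg4 _ _ e12 c[OF e01] n13]) (use S dv in auto)
      have D2: "degree E v2 = 2" by (rule deg2[OF sg4 _ _ e23 c[OF e12] n20]) (use S dv in auto)
      have D3: "degree E v3 = 2" by (rule deg2[OF sg4 _ _ e30 c[OF e23] n31]) (use S dv in auto)
      have all2: "d ! i = 2" if "i < 4" for i
      proof -
        have "i \<in> {v0,v1,v2,v3}" using that S by auto
        then have "degree E i = 2" using D0 D1 D2 D3 by auto
        then show ?thesis using deg that True by auto
      qed
      from True obtain x0 x1 x2 x3 where dd: "d = [x0,x1,x2,x3]"
        by (auto simp: numeral_eq_Suc length_Suc_conv)
      show ?thesis using all2[of 0] all2[of 1] all2[of 2] all2[of 3] dd by simp
    qed
  next
    case 3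
    have dist5: "distinct [vs!0, vs!1, vs!2, vs!3, vs!4]"
    proof -
      have ne: "vs!i \<noteq> vs!j" if "i<5" "j<5" "i\<noteq>j" for i j
        using dvs 3 that nth_eq_iff_index_eq by fastforce
      show ?thesis using ne[of 0 1] ne[of 0 2] ne[of 0 3] ne[of 0 4] ne[of 1 2] ne[of 1 3] ne[of 1 4] ne[of 2 3] ne[of 2 4] ne[of 3 4] by simp
    qed
    have m: "(0+1) mod ?k = 1" "(1+1) mod ?k = 2" "(2+1) mod ?k = 3" "(3+1) mod ?k = 4"
      using 3 by auto
    have f0: "{vs!0, vs!1} \<in> E" by (rule ed[of 0, unfolded m(1)]) (use 3 in linarith)
    have f1: "{vs!1, vs!2} \<in> E" by (rule ed[of 1, unfolded m(2)]) (use 3 in linarith)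
    have f2: "{vs!2, vs!3} \<in> E" by (rule ed[of 2, unfolded m(3)]) (use 3 in linarith)
    have f3: "{vs!3, vs!4} \<in> E" by (rule ed[of 3, unfolded m(4)]) (use 3 in linarith)
    show ?thesis using path5[OF fb R dist5 f0 f1 f2 f3] by (rule FalseE)
  qed
qed

lemma md: "(t::nat) < k \<Longrightarrow> (t + 1) mod k = (if t + 1 < k then t + 1 else 0)"
proof (cases "t + 1 < k")
  case False
  assume "t < k" then have "t + 1 = k" using False by simp
  then show ?thesis by simp
qed simp

lemma n2: "i < 4 \<Longrightarrow> [2,2,2,2::nat] ! i = 2"
  by (cases i; cases "i - 1"; cases "i - 2"; cases "i - 3"; auto simp: nth_Cons')

lemma cycle_eq:
  assumes CE: "C \<subseteq> E" and k3: "length vs \<ge> 3" and dvs: "distinct vs"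
  and Cdef: "C = {{vs ! i, vs ! ((i + 1) mod length vs)} | i. i < length vs}"
  and fin: "finite E" and deg: "\<forall>x\<in>set vs. degree E x \<le> 2"
  and meet: "\<forall>f\<in>E. f \<inter> set vs \<noteq> {}"
  shows "C = E"
proof
  show "C \<subseteq> E" by (rule CE)
  show "E \<subseteq> C"
  proof
    fix f assume f: "f \<in> E"
    let ?k = "length vs"
    obtain x where x: "x \<in> f" "x \<in> set vs" using meet f by blast
    then obtain i where i: "i < ?k" "vs ! i = x" by (auto simp: in_set_conv_nth)
    define j where "j = (if i = 0 then ?k - 1 else i - 1)"
    have j1: "j < ?k" using i k3 unfolding j_def by auto
    have j2: "(j + 1) mod ?k = i"
    proof (cases "i = 0")
      case True
      have "?k - 1 + 1 = ?k" using k3 by simp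
      then show ?thesis unfolding j_def using True by simp
    next
      case False then show ?thesis unfolding j_def using i by simp
    qed
    have i1: "(i + 1) mod ?k < ?k" using k3 by (intro mod_less_divisor) linarith
    have i2: "(i + 1) mod ?k \<noteq> i" "(i + 1) mod ?k \<noteq> j"
    proof -
      have "(i + 1) mod ?k = (if i + 1 < ?k then i + 1 else 0)" using md[OF i(1)] .
      then show "(i + 1) mod ?k \<noteq> i" "(i + 1) mod ?k \<noteq> j"
        using i k3 unfolding j_def by (auto split: if_splits)
    qed
    have e1: "{vs ! i, vs ! ((i + 1) mod ?k)} \<in> C" unfolding Cdef using i by blast
    have "{vs ! j, vs ! ((j + 1) mod ?k)} \<in> C" unfolding Cdef using j1 by blast
    then have e2: "{vs ! j, vs ! i} \<in> C" unfolding j2 .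
    have ne: "vs ! ((i + 1) mod ?k) \<noteq> vs ! j" "vs ! ((i + 1) mod ?k) \<noteq> vs ! i"
      using i1 i2 j1 i(1) dvs by (simp_all add: nth_eq_iff_index_eq)
    have neq: "{vs ! i, vs ! ((i + 1) mod ?k)} \<noteq> {vs ! j, vs ! i}"
      using ne by (auto simp: doubleton_eq_iff)
    let ?S = "{g \<in> E. x \<in> g}"
    have sub: "{{vs ! i, vs ! ((i + 1) mod ?k)}, {vs ! j, vs ! i}} \<subseteq> ?S"
      using subsetD[OF CE e1] subsetD[OF CE e2] i(2) by simp
    have c1: "card ?S \<le> 2" using deg x(2) unfolding degree_def by simp
    have c2: "card {{vs ! i, vs ! ((i + 1) mod ?k)}, {vs ! j, vs ! i}} = 2" using neq by simp
    have fS: "finite ?S" using fin by simp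
    have eqS: "{{vs ! i, vs ! ((i + 1) mod ?k)}, {vs ! j, vs ! i}} = ?S"
      by (rule card_seteq[OF fS sub]) (use c1 c2 in linarith)
    moreover have "f \<in> ?S" using f x(1) by simp
    then have "f \<in> {{vs ! i, vs ! ((i + 1) mod ?k)}, {vs ! j, vs ! i}}" using eqS by simp
    then show "f \<in> C" by (metis e1 e2 empty_iff insertE)
  qed
qed

lemma uniq_cycle:
  assumes R: "realization [2,2,2,2] E" and cyc: "is_cycle E C"
  shows "C = E"
proof -
  have l4: "length [2,2,2,2::nat] = 4" by simp
  have sg: "simple_graph 4 E" using R unfolding realization_def l4 by blast
  have deg: "\<forall>i<4. degree E i = 2" using R n2 unfolding realization_def l4 by metis
  obtain vs where CE: "C \<subseteq> E" and k3: "length vs \<ge> 3" and dvs: "distinct vs"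
    and Cdef: "C = {{vs ! i, vs ! ((i + 1) mod length vs)} | i. i < length vs}"
    using cyc unfolding is_cycle_def by blast
  have vlt: "vs ! i < 4" if "i < length vs" for i
  proof -
    have "{vs ! i, vs ! ((i + 1) mod length vs)} \<in> E" using CE Cdef that by blast
    then show ?thesis using sg_edge[OF sg] by blast
  qed
  have setlt: "set vs \<subseteq> {..<4}" using vlt by (auto simp: in_set_conv_nth)
  have cs: "card (set vs) \<ge> 3" using k3 dvs by (simp add: distinct_card)
  show ?thesis
  proof (rule cycle_eq[OF CE k3 dvs Cdef sg_finite[OF sg]])
    show "\<forall>x\<in>set vs. degree E x \<le> 2" using setlt deg by auto
    show "\<forall>f\<in>E. f \<inter> set vs \<noteq> {}"
    proof
      fix f assume "f \<in> E"
      then obtain u v where uv: "f = {u,v}" "u < 4" "v < 4" "u \<noteq> v"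
        using sg unfolding simple_graph_def by blast
      show "f \<inter> set vs \<noteq> {}"
      proof
        assume "f \<inter> set vs = {}"
        then have "set vs \<subseteq> {..<4} - {u,v}" using setlt uv by auto
        then have "card (set vs) \<le> card ({..<4} - {u,v})" by (intro card_mono) auto
        also have "\<dots> = 2" using uv by (simp add: card_Diff_subset)
        finally show False using cs by simp
      qed
    qed
  qed
qed

lemma set4: "{f i | i. i < (4::nat)} = {f 0, f 1, f 2, f 3}"
proof -
  have "{f i | i. i < (4::nat)} = f ` {..<4}" by auto
  also have "{..<4::nat} = {0,1,2,3}" by auto
  finally show ?thesis by simp
qed
lemma c4_bu:
  assumes R: "realization [2,2,2,2] E" and dist: "distinct [a,b,c,e]"
  and S: "{..<4} \<subseteq> {a,b,c,e}" and Edef: "E = {{a,b},{b,c},{c,e},{e,a}}"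
  shows "bipartite_unicyclic 4 E"
  unfolding bipartite_unicyclic_def
proof (intro conjI)
  let ?R = "{(x, y). {x, y} \<in> E}"
  have r: "(a,b) \<in> ?R" "(b,a) \<in> ?R" "(b,c) \<in> ?R" "(c,b) \<in> ?R"
          "(c,e) \<in> ?R" "(e,c) \<in> ?R" "(e,a) \<in> ?R" "(a,e) \<in> ?R"
    unfolding Edef by (simp_all add: insert_commute)
  have to: "(a, x) \<in> ?R\<^sup>*" if "x \<in> {a,b,c,e}" for x
  proof -
    have "(a, a) \<in> ?R\<^sup>*" by simp
    moreover have "(a, b) \<in> ?R\<^sup>*" using r by blast
    moreover have "(a, c) \<in> ?R\<^sup>*" using r(1,3) by (meson rtrancl.rtrancl_into_rtrancl r_into_rtrancl)
    moreover have "(a, e) \<in> ?R\<^sup>*" using r by blast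
    ultimately show ?thesis using that by blast
  qed
  have fr: "(x, a) \<in> ?R\<^sup>*" if "x \<in> {a,b,c,e}" for x
  proof -
    have "(a, a) \<in> ?R\<^sup>*" by simp
    moreover have "(b, a) \<in> ?R\<^sup>*" using r by blast
    moreover have "(c, a) \<in> ?R\<^sup>*" using r(4,2) by (meson converse_rtrancl_into_rtrancl r_into_rtrancl)
    moreover have "(e, a) \<in> ?R\<^sup>*" using r by blast
    ultimately show ?thesis using that by blast
  qed
  show "connected_graph 4 E" unfolding connected_graph_def
  proof (intro allI impI)
    fix u v :: nat assume "u < 4" "v < 4"
    then have "u \<in> {a,b,c,e}" "v \<in> {a,b,c,e}" using S by auto
    then show "(u, v) \<in> ?R\<^sup>*" using fr to by (meson rtrancl_trans)
  qed
  show "bipartite_graph 4 E" unfolding bipartite_graph_def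
  proof (intro exI allI impI)
    fix u v assume "{u, v} \<in> E"
    then show "(u = a \<or> u = c) \<noteq> (v = a \<or> v = c)"
      using dist unfolding Edef by (auto simp: doubleton_eq_iff)
  qed
  have cyc: "is_cycle E E" unfolding is_cycle_def
  proof (intro conjI exI)
    show "E \<subseteq> E" by simp
    show "3 \<le> length [a,b,c,e]" "distinct [a,b,c,e]" using dist by simp_all
    show "E = {{[a,b,c,e] ! i, [a,b,c,e] ! ((i + 1) mod length [a,b,c,e])} | i. i < length [a,b,c,e]}"
    proof -
      have l: "length [a,b,c,e] = 4" by simp
      show ?thesis unfolding Edef l set4 by simp
    qed
  qed
  show "\<exists>!C. is_cycle E C"
  proof (rule ex1I[of "is_cycle E" E])
    show "is_cycle E E" by (rule cyc)
    show "C = E" if "is_cycle E C" for C using uniq_cycle[OF R that] .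
  qed
qed

lemma card3: "A \<noteq> B \<Longrightarrow> A \<noteq> C \<Longrightarrow> B \<noteq> C \<Longrightarrow>
  card {g \<in> {A,B,C}. g \<in> E} = of_bool (A \<in> E) + of_bool (B \<in> E) + of_bool (C \<in> E)"
proof -
  assume ne: "A \<noteq> B" "A \<noteq> C" "B \<noteq> C"
  have "{g \<in> {A,B,C}. g \<in> E} = (if A \<in> E then {A} else {}) \<union> (if B \<in> E then {B} else {}) \<union> (if C \<in> E then {C} else {})"
    by auto
  then show ?thesis using ne by (cases "A \<in> E"; cases "B \<in> E"; cases "C \<in> E") auto
qed

lemma filt: "E \<subseteq> P \<Longrightarrow> {g \<in> E. w \<in> g} = {g \<in> {h \<in> P. w \<in> h}. g \<in> E}" by auto

lemma enum:
  fixes E :: "nat set set"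
  assumes sub: "E \<subseteq> {{0,1},{0,2},{0,3},{1,2},{1,3},{2,3}}"
  and deg: "\<forall>i<4. degree E i = 2"
  shows "E = {{2,3},{1,3},{0,2},{0,1}} \<or> E = {{2,3},{1,2},{0,3},{0,1}} \<or> E = {{1,3},{1,2},{0,3},{0,2}}"
proof -
  let ?P = "{{0,1},{0,2},{0,3},{1,2},{1,3},{2,3}} :: nat set set"
  have h0: "{h \<in> ?P. 0 \<in> h} = {{0,1},{0,2},{0,3}}"
  proof (rule set_eqI, rule iffI)
    fix g :: "nat set" assume "g \<in> {h \<in> ?P. 0 \<in> h}"
    then have "g \<in> ?P" "0 \<in> g" by simp_all
    then show "g \<in> {{0,1},{0,2},{0,3}}" by (elim insertE emptyE) simp_all
  next
    fix g :: "nat set" assume "g \<in> {{0,1},{0,2},{0,3}}"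
    then show "g \<in> {h \<in> ?P. 0 \<in> h}" by (elim insertE emptyE) simp_all
  qed
  have h1: "{h \<in> ?P. 1 \<in> h} = {{0,1},{1,2},{1,3}}"
  proof (rule set_eqI, rule iffI)
    fix g :: "nat set" assume "g \<in> {h \<in> ?P. 1 \<in> h}"
    then have "g \<in> ?P" "1 \<in> g" by simp_all
    then show "g \<in> {{0,1},{1,2},{1,3}}" by (elim insertE emptyE) simp_all
  next
    fix g :: "nat set" assume "g \<in> {{0,1},{1,2},{1,3}}"
    then show "g \<in> {h \<in> ?P. 1 \<in> h}" by (elim insertE emptyE) simp_all
  qed
  have h2: "{h \<in> ?P. 2 \<in> h} = {{0,2},{1,2},{2,3}}"
  proof (rule set_eqI, rule iffI)
    fix g :: "nat set" assume "g \<in> {h \<in> ?P. 2 \<in> h}"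
    then have "g \<in> ?P" "2 \<in> g" by simp_all
    then show "g \<in> {{0,2},{1,2},{2,3}}" by (elim insertE emptyE) simp_all
  next
    fix g :: "nat set" assume "g \<in> {{0,2},{1,2},{2,3}}"
    then show "g \<in> {h \<in> ?P. 2 \<in> h}" by (elim insertE emptyE) simp_all
  qed
  have h3: "{h \<in> ?P. 3 \<in> h} = {{0,3},{1,3},{2,3}}"
  proof (rule set_eqI, rule iffI)
    fix g :: "nat set" assume "g \<in> {h \<in> ?P. 3 \<in> h}"
    then have "g \<in> ?P" "3 \<in> g" by simp_all
    then show "g \<in> {{0,3},{1,3},{2,3}}" by (elim insertE emptyE) simp_all
  next
    fix g :: "nat set" assume "g \<in> {{0,3},{1,3},{2,3}}"
    then show "g \<in> {h \<in> ?P. 3 \<in> h}" by (elim insertE emptyE) simp_all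
  qed
  have d0: "of_bool ({0,1} \<in> E) + of_bool ({0,2} \<in> E) + of_bool ({0,3} \<in> E) = (2::nat)"
  proof -
    have "card {g \<in> E. 0 \<in> g} = 2" using deg unfolding degree_def by simp
    then have "card {g \<in> {{0,1},{0,2},{0,3}}. g \<in> E} = 2" unfolding filt[OF sub, of 0] h0 .
    moreover have "card {g \<in> {{0,1},{0,2},{0,3}}. g \<in> E} = of_bool ({0,1} \<in> E) + of_bool ({0,2} \<in> E) + of_bool ({0,3} \<in> E)"
      by (rule card3) (simp_all add: doubleton_eq_iff)
    ultimately show ?thesis by simp
  qed
  have d1: "of_bool ({0,1} \<in> E) + of_bool ({1,2} \<in> E) + of_bool ({1,3} \<in> E) = (2::nat)"
  proof -
    have "card {g \<in> E. 1 \<in> g} = 2" using deg unfolding degree_def by simp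
    then have "card {g \<in> {{0,1},{1,2},{1,3}}. g \<in> E} = 2" unfolding filt[OF sub, of 1] h1 .
    moreover have "card {g \<in> {{0,1},{1,2},{1,3}}. g \<in> E} = of_bool ({0,1} \<in> E) + of_bool ({1,2} \<in> E) + of_bool ({1,3} \<in> E)"
      by (rule card3) (simp_all add: doubleton_eq_iff)
    ultimately show ?thesis by simp
  qed
  have d2: "of_bool ({0,2} \<in> E) + of_bool ({1,2} \<in> E) + of_bool ({2,3} \<in> E) = (2::nat)"
  proof -
    have "card {g \<in> E. 2 \<in> g} = 2" using deg unfolding degree_def by simp
    then have "card {g \<in> {{0,2},{1,2},{2,3}}. g \<in> E} = 2" unfolding filt[OF sub, of 2] h2 .
    moreover have "card {g \<in> {{0,2},{1,2},{2,3}}. g \<in> E} = of_bool ({0,2} \<in> E) + of_bool ({1,2} \<in> E) + of_bool ({2,3} \<in> E)"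
      by (rule card3) (simp_all add: doubleton_eq_iff)
    ultimately show ?thesis by simp
  qed
  have d3: "of_bool ({0,3} \<in> E) + of_bool ({1,3} \<in> E) + of_bool ({2,3} \<in> E) = (2::nat)"
  proof -
    have "card {g \<in> E. 3 \<in> g} = 2" using deg unfolding degree_def by simp
    then have "card {g \<in> {{0,3},{1,3},{2,3}}. g \<in> E} = 2" unfolding filt[OF sub, of 3] h3 .
    moreover have "card {g \<in> {{0,3},{1,3},{2,3}}. g \<in> E} = of_bool ({0,3} \<in> E) + of_bool ({1,3} \<in> E) + of_bool ({2,3} \<in> E)"
      by (rule card3) (simp_all add: doubleton_eq_iff)
    ultimately show ?thesis by simp
  qed
  have Eeq: "E = (if {0,1} \<in> E then {{0,1}} else {}) \<union> (if {0,2} \<in> E then {{0,2}} else {}) \<union>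
     (if {0,3} \<in> E then {{0,3}} else {}) \<union> (if {1,2} \<in> E then {{1,2}} else {}) \<union>
     (if {1,3} \<in> E then {{1,3}} else {}) \<union> (if {2,3} \<in> E then {{2,3}} else {})"
  proof (rule set_eqI, rule iffI)
    fix g :: "nat set" assume "g \<in> E"
    moreover then have "g \<in> ?P" using sub by blast
    ultimately show "g \<in> (if {0,1} \<in> E then {{0,1}} else {}) \<union> (if {0,2} \<in> E then {{0,2}} else {}) \<union>
     (if {0,3} \<in> E then {{0,3}} else {}) \<union> (if {1,2} \<in> E then {{1,2}} else {}) \<union>
     (if {1,3} \<in> E then {{1,3}} else {}) \<union> (if {2,3} \<in> E then {{2,3}} else {})"
      by (elim insertE emptyE) simp_all
  qed (auto split: if_splits)
  define x01 where "x01 = ({0,1} \<in> E)"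
  define x02 where "x02 = ({0,2} \<in> E)"
  define x03 where "x03 = ({0,3} \<in> E)"
  define x12 where "x12 = ({1,2} \<in> E)"
  define x13 where "x13 = ({1,3} \<in> E)"
  define x23 where "x23 = ({2,3} \<in> E)"
  have Eeq2: "E = (if x01 then {{0,1}} else {}) \<union> (if x02 then {{0,2}} else {}) \<union>
     (if x03 then {{0,3}} else {}) \<union> (if x12 then {{1,2}} else {}) \<union>
     (if x13 then {{1,3}} else {}) \<union> (if x23 then {{2,3}} else {})"
    using Eeq unfolding x01_def x02_def x03_def x12_def x13_def x23_def .
  have D: "of_bool x01 + of_bool x02 + of_bool x03 = (2::nat)"
     "of_bool x01 + of_bool x12 + of_bool x13 = (2::nat)"
     "of_bool x02 + of_bool x12 + of_bool x23 = (2::nat)"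
     "of_bool x03 + of_bool x13 + of_bool x23 = (2::nat)"
    using d0 d1 d2 d3 unfolding x01_def x02_def x03_def x12_def x13_def x23_def by auto
  show ?thesis
    unfolding Eeq2 using D
    by (cases x01; cases x02; cases x03; cases x12; cases x13; cases x23; simp)
qed


lemma sub6:
  assumes sg: "simple_graph 4 E"
  shows "E \<subseteq> {{0,1},{0,2},{0,3},{1,2},{1,3},{2,3}}"
proof
  fix f assume "f \<in> E"
  then obtain u v :: nat where uv: "f = {u,v}" "u < 4" "v < 4" "u \<noteq> v"
    using sg unfolding simple_graph_def by blast
  have "u = 0 \<or> u = 1 \<or> u = 2 \<or> u = 3" using uv(2) by auto
  moreover have "v = 0 \<or> v = 1 \<or> v = 2 \<or> v = 3" using uv(3) by auto
  ultimately show "f \<in> {{0,1},{0,2},{0,3},{1,2},{1,3},{2,3}}"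
    using uv(1,4) by (elim disjE) (simp_all add: insert_commute)
qed

lemma bwd:
  assumes R: "realization [2,2,2,2] E"
  shows "bipartite_unicyclic 4 E"
proof -
  have l4: "length [2,2,2,2::nat] = 4" by simp
  have sg: "simple_graph 4 E" using R unfolding realization_def l4 by blast
  have deg: "\<forall>i<4. degree E i = 2" using R n2 unfolding realization_def l4 by metis
  have e3: "{{2,3},{1,3},{0,2},{0,1}} = {{0,1},{1,3},{3,2},{2,0::nat}}" by (simp add: insert_commute)
  have e2: "{{2,3},{1,2},{0,3},{0,1}} = {{0,1},{1,2},{2,3},{3,0::nat}}" by (simp add: insert_commute)
  have e1: "{{1,3},{1,2},{0,3},{0,2}} = {{0,2},{2,1},{1,3},{3,0::nat}}" by (simp add: insert_commute)
  have "E = {{2,3},{1,3},{0,2},{0,1}} \<or> E = {{2,3},{1,2},{0,3},{0,1}} \<or> E = {{1,3},{1,2},{0,3},{0,2}}"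
    by (rule enum[OF sub6[OF sg] deg])
  then show ?thesis
  proof (elim disjE)
    assume "E = {{2,3},{1,3},{0,2},{0,1}}"
    then have Ed: "E = {{0,1},{1,3},{3,2},{2,0}}" using e3 by simp
    show ?thesis by (rule c4_bu[OF R _ _ Ed]) auto
  next
    assume "E = {{2,3},{1,2},{0,3},{0,1}}"
    then have Ed: "E = {{0,1},{1,2},{2,3},{3,0}}" using e2 by simp
    show ?thesis by (rule c4_bu[OF R _ _ Ed]) auto
  next
    assume "E = {{1,3},{1,2},{0,3},{0,2}}"
    then have Ed: "E = {{0,2},{2,1},{1,3},{3,0}}" using e1 by simp
    show ?thesis by (rule c4_bu[OF R _ _ Ed]) auto
  qed
qed

theorem corollary8p3:
  fixes d :: "nat list"
  assumes "\<forall>i < length d. d ! i > 0"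
    and "graphic d"
  shows "forcibly_bipartite_unicyclic d \<longleftrightarrow> d = [2, 2, 2, 2]"
proof
  assume "forcibly_bipartite_unicyclic d"
  then show "d = [2, 2, 2, 2]" using fwd assms(2) by blast
next
  assume d: "d = [2, 2, 2, 2]"
  show "forcibly_bipartite_unicyclic d"
    unfolding forcibly_bipartite_unicyclic_def
  proof (intro allI impI)
    fix E assume "realization d E"
    then have "bipartite_unicyclic 4 E" using bwd d by simp
    moreover have l: "length d = 4" using d by simp
    ultimately show "bipartite_unicyclic (length d) E" by simp
  qed
qed

end
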